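(* Let $R$ be an arbitrary associative ring with $1$, let $A,B\unlhd R$ be two-sided ideals, and let $n\ge 3$. Let $H\le \operatorname{GL}(n,R)$ be any subgroup such that $E(n,A)\le H\le \operatorname{GL}(n,R,A)$. Then $$ C_{\operatorname{GL}(n,R)}\big(H,\operatorname{GL}(n,R,B)\big)=C_{\Omega(A,B)}\big(n,R,(B:A)\big). $$
   Context: Commutators are left-normed: $[x,y]=xyx^{-1}y^{-1}$. For subgroups $F,H$ of a group $G$, the centraliser of $F$ modulo $H$ is $C_G(F,H)=\{g\in G\mid [f,g]\in H \text{ for all } f\in F\}$. For $\xi\in R$ and $1\le i\ne j\le n$, $t_{ij}(\xi)=e+\xi e_{ij}$ is the elementary transvection ($e$ the identity matrix, $e_{ij}$ the standard matrix unit). For an ideal $I\unlhd R$, $E(n,I)$ is the subgroup of $\operatorname{GL}(n,R)$ generated by all $t_{ij}(\xi)$ with $\xi\in I$, $1\le i\neq j\le n$, and $\operatorname{GL}(n,R,I)=\{g\in\operatorname{GL}(n,R)\mid g_{ij}\equiv\delta_{ij}\pmod I\}$ is the principal congruence subgroup (kernel of reduction modulo $I$). For two-sided ideals $A,B$, the ideal quotient is $(B:A)=\{x\in R\mid xA\subseteq B \text{ and } Ax\subseteq B\}$, a two-sided ideal. The relative centraliser of $A$ modulo $B$ is $\operatorname{Cent}_R(A,B)=\{x\in R\mid xa-ax\in B \text{ for all } a\in A\}$. Finally $$C_{\Omega(A,B)}(n,R,(B:A))=\{g\in\operatorname{GL}(n,R)\mid g_{ij}\in(B:A)\text{ and } g_{ii}-g_{jj}\in(B:A)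 \text{ for all } i\ne j,\ \text{and } g_{ii}\in\operatorname{Cent}_R(A,B)\text{ for all } i\}.$$ *)

theory Defs
  imports "HOL-Analysis.Analysis"
begin

text \<open>Square n x n matrices over an associative ring 'a with 1 (class ring_1, not
necessarily commutative), indexed by a finite type 'n with CARD('n) = n.\<close>

definition GL :: "('a::ring_1 ^ 'n ^ 'n) set" where
  "GL = {g. invertible g}"

definition minv :: "'a::ring_1 ^ 'n ^ 'n \<Rightarrow> 'a ^ 'n ^ 'n" where
  "minv g = (THE h. g ** h = mat 1 \<and> h ** g = mat 1)"

definition comm :: "'a::ring_1 ^ 'n ^ 'n \<Rightarrow> 'a ^ 'n ^ 'n \<Rightarrow> 'a ^ 'n ^ 'n" where
  "comm x y = x ** y ** minv x ** minv y"

definition ideal2 :: "'a::ring_1 set \<Rightarrow> bool" where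
  "ideal2 I \<longleftrightarrow> 0 \<in> I \<and> (\<forall>x\<in>I. \<forall>y\<in>I. x + y \<in> I) \<and> (\<forall>x\<in>I. - x \<in> I)
     \<and> (\<forall>x\<in>I. \<forall>r. r * x \<in> I \<and> x * r \<in> I)"

definition subgroup_GL :: "('a::ring_1 ^ 'n ^ 'n) set \<Rightarrow> bool" where
  "subgroup_GL H \<longleftrightarrow> H \<subseteq> GL \<and> mat 1 \<in> H \<and> (\<forall>x\<in>H. \<forall>y\<in>H. x ** y \<in> H)
     \<and> (\<forall>x\<in>H. minv x \<in> H)"

definition transv :: "'n \<Rightarrow> 'n \<Rightarrow> 'a::ring_1 \<Rightarrow> 'a ^ 'n ^ 'n" where
  "transv i j \<xi> = (\<chi> k l. (if k = l then 1 else 0) + (if k = i \<and> l = j then \<xi> else 0))"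

inductive_set En :: "'a::ring_1 set \<Rightarrow> ('a ^ 'n ^ 'n) set" for I where
  En_one: "mat 1 \<in> En I"
| En_gen: "\<xi> \<in> I \<Longrightarrow> i \<noteq> j \<Longrightarrow> transv i j \<xi> \<in> En I"
| En_mult: "x \<in> En I \<Longrightarrow> y \<in> En I \<Longrightarrow> x ** y \<in> En I"
| En_inv: "x \<in> En I \<Longrightarrow> minv x \<in> En I"

definition GLrel :: "'a::ring_1 set \<Rightarrow> ('a ^ 'n ^ 'n) set" where
  "GLrel I = {g \<in> GL. \<forall>i j. g $ i $ j - (if i = j then 1 else 0) \<in> I}"

definition centr :: "('a::ring_1 ^ 'n ^ 'n) set \<Rightarrow> ('a ^ 'n ^ 'n) set \<Rightarrow> ('a ^ 'n ^ 'n) set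
    \<Rightarrow> ('a ^ 'n ^ 'n) set" where
  "centr G F H = {g \<in> G. \<forall>f\<in>F. comm f g \<in> H}"

definition ideal_quot :: "'a::ring_1 set \<Rightarrow> 'a set \<Rightarrow> 'a set" where
  "ideal_quot B A = {x. (\<forall>a\<in>A. x * a \<in> B) \<and> (\<forall>a\<in>A. a * x \<in> B)}"

definition Cent :: "'a::ring_1 set \<Rightarrow> 'a set \<Rightarrow> 'a set" where
  "Cent A B = {x. \<forall>a\<in>A. x * a - a * x \<in> B}"

definition C_Omega :: "'a::ring_1 set \<Rightarrow> 'a set \<Rightarrow> ('a ^ 'n ^ 'n) set" where
  "C_Omega A B = {g \<in> GL.
      (\<forall>i j. i \<noteq> j \<longrightarrow> g $ i $ j \<in> ideal_quot B A \<and> g $ i $ i - g $ j $ j \<in> ideal_quot B A)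
    \<and> (\<forall>i. g $ i $ i \<in> Cent A B)}"

end

theory Submission
  imports Defs
begin

lemma id_add: "ideal2 I \<Longrightarrow> x \<in> I \<Longrightarrow> y \<in> I \<Longrightarrow> x + y \<in> I"
  unfolding ideal2_def by blast
lemma id_neg: "ideal2 I \<Longrightarrow> x \<in> I \<Longrightarrow> - x \<in> I"
  unfolding ideal2_def by blast
lemma id_diff: "ideal2 I \<Longrightarrow> x \<in> I \<Longrightarrow> y \<in> I \<Longrightarrow> x - y \<in> I"
  unfolding ideal2_def diff_conv_add_uminus by blast
lemma id_lm: "ideal2 I \<Longrightarrow> x \<in> I \<Longrightarrow> r * x \<in> I"
  unfolding ideal2_def by blast
lemma id_rm: "ideal2 I \<Longrightarrow> x \<in> I \<Longrightarrow> x * r \<in> I"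
  unfolding ideal2_def by blast
lemma id_zero: "ideal2 I \<Longrightarrow> 0 \<in> I"
  unfolding ideal2_def by blast

lemma id_sum: assumes "ideal2 I" "finite S" "\<And>x. x \<in> S \<Longrightarrow> f x \<in> I"
  shows "sum f S \<in> I"
  using assms(2,3)
proof (induction S rule: finite_induct)
  case empty then show ?case using assms(1) by (simp add: id_zero)
next
  case (insert x F) then show ?case using assms(1) by (simp add: id_add)
qed

definition MB :: "'a::ring_1 set \<Rightarrow> 'a ^ 'n ^ 'n \<Rightarrow> bool" where
  "MB I X \<longleftrightarrow> (\<forall>i j. X $ i $ j \<in> I)"

lemma MB_left: assumes "ideal2 I" "MB I X" shows "MB I (Y ** X)"
  using assms unfolding MB_def matrix_matrix_mult_def
  by (auto intro!: id_sum id_lm)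

lemma MB_right: assumes "ideal2 I" "MB I X" shows "MB I (X ** Y)"
  using assms unfolding MB_def matrix_matrix_mult_def
  by (auto intro!: id_sum id_rm)

lemma sub_rdistrib: "((X::'a::ring_1^'n^'n) - Y) ** Z = X ** Z - Y ** Z"
  by (simp add: matrix_matrix_mult_def vec_eq_iff sum_subtractf left_diff_distrib)

lemma minv_prop: assumes "invertible (g::'a::ring_1^'n^'n)"
  shows "g ** minv g = mat 1 \<and> minv g ** g = mat 1"
proof -
  obtain h where h: "g ** h = mat 1" "h ** g = mat 1" using assms invertible_def by blast
  have u: "h2 = h" if "g ** h2 = mat 1 \<and> h2 ** g = mat 1" for h2
  proof -
    have "h2 = h2 ** (g ** h)" using h by (simp only: matrix_mul_rid)
    also have "\<dots> = (h2 ** g) ** h" by (rule matrix_mul_assoc)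
    also have "\<dots> = h" using that by (simp only: matrix_mul_lid)
    finally show ?thesis .
  qed
  have "minv g = h" unfolding minv_def
  proof (rule the_equality)
    show "g ** h = mat 1 \<and> h ** g = mat 1" using h by blast
  next
    fix h2 assume "g ** h2 = mat 1 \<and> h2 ** g = mat 1" then show "h2 = h" by (rule u)
  qed
  then show ?thesis using h by simp
qed

lemma inv_mult: assumes "invertible (x::'a::ring_1^'n^'n)" "invertible y"
  shows "invertible (x ** y)"
proof -
  obtain x' where x: "x ** x' = mat 1" "x' ** x = mat 1" using assms invertible_def by blast
  obtain y' where y: "y ** y' = mat 1" "y' ** y = mat 1" using assms invertible_def by blast
  have "(x ** y) ** (y' ** x') = x ** (y ** y') ** x'" by (simp only: matrix_mul_assoc)
  also have "\<dots> = mat 1" by (simp only: x y matrix_mul_rid)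
  finally have 1: "(x ** y) ** (y' ** x') = mat 1" .
  have "(y' ** x') ** (x ** y) = y' ** (x' ** x) ** y" by (simp only: matrix_mul_assoc)
  also have "\<dots> = mat 1" by (simp only: x y matrix_mul_rid matrix_mul_lid)
  finally have 2: "(y' ** x') ** (x ** y) = mat 1" .
  show ?thesis using 1 2 invertible_def by blast
qed

lemma inv_minv: assumes "invertible (x::'a::ring_1^'n^'n)" shows "invertible (minv x)"
  using minv_prop[OF assms] invertible_def by blast

lemma GLrel_iff: "g \<in> GLrel I \<longleftrightarrow> g \<in> GL \<and> MB I (g - mat 1)"
  by (simp add: GLrel_def MB_def mat_def)

lemma transv_left: "(transv i j a ** g) $ k $ l = g $ k $ l + (if k = i then a * g $ j $ l else 0)"
proof -
  have "(transv i j a ** g) $ k $ l = (\<Sum>m\<in>UNIV. (if m = k then g $ m $ l else 0) + (if m = j then (if k = i then a * g $ j $ l else 0) else 0))"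
    unfolding matrix_matrix_mult_def transv_def by (rule trans[OF vec_lambda_beta[THEN arg_cong[where f="\<lambda>v. v $ l"]]], simp only: vec_lambda_beta, rule sum.cong) (auto simp: distrib_right)
  also have "\<dots> = g $ k $ l + (if k = i then a * g $ j $ l else 0)"
    by (simp only: sum.distrib sum.delta finite UNIV_I if_True)
  finally show ?thesis .
qed

lemma transv_right: "(g ** transv i j a) $ k $ l = g $ k $ l + (if l = j then g $ k $ i * a else 0)"
proof -
  have "(g ** transv i j a) $ k $ l = (\<Sum>m\<in>UNIV. (if m = l then g $ k $ m else 0) + (if m = i then (if l = j then g $ k $ i * a else 0) else 0))"
    unfolding matrix_matrix_mult_def transv_def by (rule trans[OF vec_lambda_beta[THEN arg_cong[where f="\<lambda>v. v $ l"]]], simp only: vec_lambda_beta, rule sum.cong) (auto simp: distrib_left)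
  also have "\<dots> = g $ k $ l + (if l = j then g $ k $ i * a else 0)"
    by (simp only: sum.distrib sum.delta finite UNIV_I if_True)
  finally show ?thesis .
qed

lemma third: assumes "CARD('n) \<ge> 3" shows "\<exists>r::'n. r \<noteq> p \<and> r \<noteq> q"
proof (rule ccontr)
  assume "\<not> ?thesis"
  then have "(UNIV::'n set) \<subseteq> {p, q}" by auto
  then have "CARD('n) \<le> card {p, q}" by (simp add: card_mono)
  also have "\<dots> \<le> 2" by (simp add: card_insert_le_m1)
  finally show False using assms by simp
qed

lemma sub_ldistrib: "(Z::'a::ring_1^'n^'n) ** (X - Y) = Z ** X - Z ** Y"
  by (simp add: matrix_matrix_mult_def vec_eq_iff sum_subtractf right_diff_distrib)

lemma minv_cancel: assumes "invertible (g::'a::ring_1^'n^'n)"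
  shows "minv g ** (g ** Z) = Z" "g ** (minv g ** Z) = Z"
  using minv_prop[OF assms] by (simp_all only: matrix_mul_assoc matrix_mul_lid)

lemma sub_dir:
  fixes A B :: "'a::ring_1 set" and H :: "('a ^ 'n ^ 'n) set"
  assumes "CARD('n) \<ge> 3" and "ideal2 A" and "ideal2 B"
    and "subgroup_GL H" and "En A \<subseteq> H" and g: "g \<in> centr GL H (GLrel B)"
  shows "g \<in> C_Omega A B"
proof -
  have gGL: "g \<in> GL" and gc: "\<And>f. f \<in> H \<Longrightarrow> comm f g \<in> GLrel B"
    using g by (auto simp: centr_def)
  have ginv: "invertible g" using gGL by (simp add: GL_def)
  have key: "(if k = i then a * g $ j $ l else 0) - (if l = j then g $ k $ i * a else 0) \<in> B"
    if ij: "i \<noteq> j" and a: "a \<in> A" for i j a k l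
  proof -
    define t where "t = (transv i j a :: 'a^'n^'n)"
    have tH: "t \<in> H" using assms(5) En_gen[OF a ij] t_def by blast
    have tinv: "invertible t" using tH assms(4) by (auto simp: subgroup_GL_def GL_def)
    have "MB B (comm t g - mat 1)" using gc[OF tH] GLrel_iff by blast
    then have "MB B ((comm t g - mat 1) ** g ** t)" using assms(3) MB_right by blast
    moreover have "(comm t g - mat 1) ** g ** t = t ** g - g ** t"
    proof -
      have "comm t g ** g ** t = t ** g"
        unfolding comm_def by (simp only: matrix_mul_assoc[symmetric] minv_cancel[OF ginv]
            minv_prop[OF tinv] matrix_mul_rid)
      then show ?thesis by (simp add: sub_rdistrib)
    qed
    ultimately have "(t ** g - g ** t) $ k $ l \<in> B" by (simp add: MB_def)
    moreover have "(t ** g - g ** t) $ k $ l =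
      (if k = i then a * g $ j $ l else 0) - (if l = j then g $ k $ i * a else 0)"
      unfolding t_def by (simp add: transv_left transv_right)
    ultimately show ?thesis by simp
  qed
  have off1: "a * g $ j $ l \<in> B" if "j \<noteq> l" "a \<in> A" for j l a
  proof -
    obtain i where "i \<noteq> j" using third[OF assms(1), of j j] by blast
    from key[OF this that(2), of i l] show ?thesis using that by simp
  qed
  have off2: "g $ k $ i * a \<in> B" if "k \<noteq> i" "a \<in> A" for k i a
  proof -
    obtain j where "i \<noteq> j" using third[OF assms(1), of i i] by metis
    from key[OF this that(2), of k j] have "- (g $ k $ i * a) \<in> B" using that by simp
    from id_neg[OF assms(3) this] show ?thesis by simp
  qed
  have diag: "a * g $ j $ j - g $ i $ i * a \<in> B" if "i \<noteq> j" "a \<in> A" for i j a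
    using key[OF that, of i j] by simp
  have d1: "(g $ p $ p - g $ q $ q) * a \<in> B" if "p \<noteq> q" "a \<in> A" for p q a
  proof -
    obtain r where r: "r \<noteq> p" "r \<noteq> q" using third[OF assms(1)] by blast
    have "(a * g $ r $ r - g $ q $ q * a) - (a * g $ r $ r - g $ p $ p * a) \<in> B"
      using id_diff[OF assms(3) diag[of q r a] diag[of p r a]] r that by auto
    then show ?thesis by (simp add: algebra_simps)
  qed
  have d2: "a * (g $ p $ p - g $ q $ q) \<in> B" if "p \<noteq> q" "a \<in> A" for p q a
  proof -
    obtain r where r: "r \<noteq> p" "r \<noteq> q" using third[OF assms(1)] by blast
    have "(a * g $ p $ p - g $ r $ r * a) - (a * g $ q $ q - g $ r $ r * a) \<in> B"
      using id_diff[OF assms(3) diag[of r p a] diag[of r q a]] r that by auto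
    then show ?thesis by (simp add: algebra_simps)
  qed
  have cent: "g $ i $ i * a - a * g $ i $ i \<in> B" if "a \<in> A" for i a
  proof -
    obtain j where j: "j \<noteq> i" using third[OF assms(1), of i i] by blast
    have "(g $ i $ i - g $ j $ j) * a - (a * g $ i $ i - g $ j $ j * a) \<in> B"
      using id_diff[OF assms(3) d1[of i j a] diag[of j i a]] j that by auto
    then show ?thesis by (simp add: algebra_simps)
  qed
  show ?thesis unfolding C_Omega_def ideal_quot_def Cent_def
    using gGL off1 off2 d1 d2 cent by auto
qed

lemma sup_dir:
  fixes A B :: "'a::ring_1 set" and H :: "('a ^ 'n ^ 'n) set"
  assumes "ideal2 A" and "ideal2 B"
    and "subgroup_GL H" and "H \<subseteq> GLrel A" and g: "g \<in> C_Omega A B"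
  shows "g \<in> centr GL H (GLrel B)"
proof -
  have gGL: "g \<in> GL" and gq: "\<And>i j. i \<noteq> j \<Longrightarrow> g $ i $ j \<in> ideal_quot B A"
    and gd: "\<And>i j. i \<noteq> j \<Longrightarrow> g $ i $ i - g $ j $ j \<in> ideal_quot B A"
    and gc: "\<And>i. g $ i $ i \<in> Cent A B"
    using g by (auto simp: C_Omega_def)
  have ginv: "invertible g" using gGL by (simp add: GL_def)
  have "comm h g \<in> GLrel B" if hH: "h \<in> H" for h
  proof -
    have hA: "MB A (h - mat 1)" and hGL: "h \<in> GL" using hH assms(4) GLrel_iff by blast+
    have hinv: "invertible h" using hGL by (simp add: GL_def)
    define a where "a = h - mat 1"
    have aA: "\<And>i j. a $ i $ j \<in> A" using hA a_def MB_def by blast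
    have eq: "h ** g - g ** h = a ** g - g ** a"
      unfolding a_def by (simp add: sub_rdistrib sub_ldistrib)
    have "MB B (a ** g - g ** a)" unfolding MB_def
    proof (intro allI)
      fix i j
      let ?S1 = "\<Sum>k\<in>UNIV - {j}. a $ i $ k * g $ k $ j"
      let ?S2 = "\<Sum>k\<in>UNIV - {i}. g $ i $ k * a $ k $ j"
      have ee: "(a ** g - g ** a) $ i $ j = (a $ i $ j * g $ j $ j - g $ i $ i * a $ i $ j) + (?S1 - ?S2)"
      proof -
        have e1: "(a ** g) $ i $ j = a $ i $ j * g $ j $ j + ?S1"
          unfolding matrix_matrix_mult_def by (simp add: sum.remove[of UNIV j])
        have e2: "(g ** a) $ i $ j = g $ i $ i * a $ i $ j + ?S2"
          unfolding matrix_matrix_mult_def by (simp add: sum.remove[of UNIV i])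
        show ?thesis by (simp add: e1 e2 algebra_simps)
      qed
      have s1: "?S1 \<in> B"
        by (rule id_sum[OF assms(2)]) (use gq aA in \<open>auto simp: ideal_quot_def\<close>)
      have s2: "?S2 \<in> B"
        by (rule id_sum[OF assms(2)]) (use gq aA in \<open>auto simp: ideal_quot_def\<close>)
      have cc: "a $ i $ j * g $ j $ j - g $ i $ i * a $ i $ j \<in> B"
      proof (cases "i = j")
        case True
        then show ?thesis using id_neg[OF assms(2), of "g $ i $ i * a $ i $ i - a $ i $ i * g $ i $ i"]
          gc[of i] aA[of i i] by (simp add: Cent_def)
      next
        case False
        have 0: "g $ j $ j * a $ i $ j - a $ i $ j * g $ j $ j \<in> B"
          using gc[of j] aA[of i j] by (simp add: Cent_def)
        have 1: "- (g $ j $ j * a $ i $ j - a $ i $ j * g $ j $ j) \<in> B"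
          by (rule id_neg[OF assms(2) 0])
        have 2: "(g $ j $ j - g $ i $ i) * a $ i $ j \<in> B"
          using gd[of j i] False aA[of i j] by (simp add: ideal_quot_def)
        have "- (g $ j $ j * a $ i $ j - a $ i $ j * g $ j $ j) + (g $ j $ j - g $ i $ i) * a $ i $ j \<in> B"
          using id_add[OF assms(2) 1 2] .
        then show ?thesis by (simp add: algebra_simps)
      qed
      show "(a ** g - g ** a) $ i $ j \<in> B"
        unfolding ee by (rule id_add[OF assms(2) cc id_diff[OF assms(2) s1 s2]])
    qed
    then have m: "MB B ((h ** g - g ** h) ** minv h ** minv g)"
      unfolding eq by (intro MB_right[OF assms(2)])
    have ce: "(h ** g - g ** h) ** minv h ** minv g = comm h g - mat 1"
      unfolding comm_def
      by (simp only: sub_rdistrib matrix_mul_assoc[symmetric] minv_cancel(2)[OF hinv] minv_prop[OF ginv])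
    have cg: "comm h g \<in> GL" unfolding comm_def GL_def
      by (simp only: mem_Collect_eq) (intro inv_mult inv_minv hinv ginv)
    show ?thesis unfolding GLrel_iff using cg m ce by simp
  qed
  then show ?thesis using gGL by (simp add: centr_def)
qed

theorem theorem1:
  fixes A B :: "'a::ring_1 set"
    and H :: "('a ^ 'n ^ 'n) set"
  assumes "CARD('n) \<ge> 3"
    and "ideal2 A" and "ideal2 B"
    and "subgroup_GL H"
    and "En A \<subseteq> H" and "H \<subseteq> GLrel A"
  shows "centr GL H (GLrel B) = C_Omega A B"
  using sub_dir[OF assms(1-5)] sup_dir[OF assms(2-4,6)] by blast

end
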